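(* Let $G_1=(V_1,E_1)$ and $G_2=(V_2,E_2)$ be bispanning graphs on disjoint vertex and edge sets, let $d_1\in E_1$ have ends $x_1,y_1$ and $d_2\in E_2$ have ends $x_2,y_2$, and let $\sigma:\{x_1,y_1\}\to\{x_2,y_2\}$ be a bijection. Then the graph obtained from the disjoint union of $G_1$ and $G_2$ by identifying $x_1$ with $\sigma(x_1)$ and $y_1$ with $\sigma(y_1)$ and then deleting $d_1$ and $d_2$ (the $2$-clique sum with no remaining clique edges) is bispanning.
   Context: Graphs are finite, undirected, may have parallel edges, no loops. A spanning tree of $G=(V,E)$ is $T\subseteq E$ with $(V,T)$ connected and acyclic; $G$ is bispanning if $E$ is the union of two disjoint spanning trees. *)

theory Defs
  imports Main
begin

definition multigraph :: "'v set \<Rightarrow> 'e set \<Rightarrow> ('e \<Rightarrow> 'v set) \<Rightarrow> bool" where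
  "multigraph V E ends \<longleftrightarrow> finite V \<and> finite E \<and>
     (\<forall>e\<in>E. ends e \<subseteq> V \<and> card (ends e) = 2)"

inductive walk :: "('e \<Rightarrow> 'v set) \<Rightarrow> 'e set \<Rightarrow> 'v \<Rightarrow> 'e list \<Rightarrow> 'v \<Rightarrow> bool"
  for ends F where
  walk_Nil: "walk ends F u [] u"
| walk_Cons: "\<lbrakk>e \<in> F; ends e = {u, w}; walk ends F w es v\<rbrakk> \<Longrightarrow> walk ends F u (e # es) v"

definition connected_on :: "'v set \<Rightarrow> 'e set \<Rightarrow> ('e \<Rightarrow> 'v set) \<Rightarrow> bool" where
  "connected_on V F ends \<longleftrightarrow> (\<forall>u\<in>V. \<forall>v\<in>V. \<exists>es. walk ends F u es v)"

definition acyclic_edges :: "'e set \<Rightarrow> ('e \<Rightarrow> 'v set) \<Rightarrow> bool" where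
  "acyclic_edges F ends \<longleftrightarrow> \<not> (\<exists>u es. es \<noteq> [] \<and> distinct es \<and> walk ends F u es u)"

definition spanning_tree :: "'v set \<Rightarrow> 'e set \<Rightarrow> ('e \<Rightarrow> 'v set) \<Rightarrow> 'e set \<Rightarrow> bool" where
  "spanning_tree V E ends T \<longleftrightarrow> T \<subseteq> E \<and> connected_on V T ends \<and> acyclic_edges T ends"

definition bispanning :: "'v set \<Rightarrow> 'e set \<Rightarrow> ('e \<Rightarrow> 'v set) \<Rightarrow> bool" where
  "bispanning V E ends \<longleftrightarrow> multigraph V E ends \<and>
     (\<exists>T1 T2. T1 \<inter> T2 = {} \<and> T1 \<union> T2 = E \<and>
        spanning_tree V E ends T1 \<and> spanning_tree V E ends T2)"

text \<open>2-clique sum: G2's vertex sigma x1 is identified with x1 and sigma y1 with y1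
  (the merged vertices keep the names x1, y1), then d1 and d2 are deleted.\<close>
definition glue_map :: "'v \<Rightarrow> 'v \<Rightarrow> ('v \<Rightarrow> 'v) \<Rightarrow> 'v \<Rightarrow> 'v" where
  "glue_map x1 y1 \<sigma> v = (if v = \<sigma> x1 then x1 else if v = \<sigma> y1 then y1 else v)"

definition sum_V :: "'v set \<Rightarrow> 'v set \<Rightarrow> 'v \<Rightarrow> 'v \<Rightarrow> ('v \<Rightarrow> 'v) \<Rightarrow> 'v set" where
  "sum_V V1 V2 x1 y1 \<sigma> = V1 \<union> glue_map x1 y1 \<sigma> ` V2"

definition sum_E :: "'e set \<Rightarrow> 'e set \<Rightarrow> 'e \<Rightarrow> 'e \<Rightarrow> 'e set" where
  "sum_E E1 E2 d1 d2 = (E1 - {d1}) \<union> (E2 - {d2})"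

definition sum_ends :: "'e set \<Rightarrow> ('e \<Rightarrow> 'v set) \<Rightarrow> ('e \<Rightarrow> 'v set)
    \<Rightarrow> 'v \<Rightarrow> 'v \<Rightarrow> ('v \<Rightarrow> 'v) \<Rightarrow> 'e \<Rightarrow> 'v set" where
  "sum_ends E1 ends1 ends2 x1 y1 \<sigma> e =
     (if e \<in> E1 then ends1 e else glue_map x1 y1 \<sigma> ` ends2 e)"

end

theory Submission
  imports Defs
begin

inductive_cases walk_ConsE: "walk ends F u (e # es) v"
inductive_cases walk_NilE: "walk ends F u [] v"

lemma walk_append: "walk ends F u xs m \<Longrightarrow> walk ends F m ys v \<Longrightarrow> walk ends F u (xs @ ys) v"
  by (induction rule: walk.induct) (auto intro: walk.intros)

lemma walk_split: "walk ends F u (xs @ ys) v \<Longrightarrow> \<exists>m. walk ends F u xs m \<and> walk ends F m ys v"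
proof (induction xs arbitrary: u)
  case Nil then show ?case by (simp, blast intro: walk.walk_Nil)
next
  case (Cons x xs)
  from Cons.prems obtain w where "x \<in> F" "ends x = {u, w}" "walk ends F w (xs @ ys) v"
    by (auto elim: walk_ConsE)
  with Cons.IH show ?case by (blast intro: walk.intros)
qed

lemma walk_single: "e \<in> F \<Longrightarrow> ends e = {a, b} \<Longrightarrow> walk ends F a [e] b"
  by (auto intro: walk.intros)

lemma walk_rev: "walk ends F u es v \<Longrightarrow> walk ends F v (rev es) u"
proof (induction rule: walk.induct)
  case (walk_Nil u) then show ?case by (auto intro: walk.intros)
next
  case (walk_Cons e u w es v)
  have "walk ends F w [e] u" using walk_Cons by (auto intro: walk_single simp: insert_commute)
  then show ?case using walk_Cons walk_append by fastforce
qed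

lemma walk_edges: "walk ends F u es v \<Longrightarrow> set es \<subseteq> F"
  by (induction rule: walk.induct) auto

lemma walk_restrict: "walk ends F u es v \<Longrightarrow> set es \<subseteq> F' \<Longrightarrow> walk ends F' u es v"
  by (induction rule: walk.induct) (auto intro: walk.intros)

lemma walk_mono: assumes "walk ends F u es v" "F \<subseteq> F'" shows "walk ends F' u es v"
  using walk_restrict[OF assms(1)] walk_edges[OF assms(1)] assms(2) by blast

lemma walk_map:
  assumes "walk ends F u es v"
    and "\<And>e a b. e \<in> F \<Longrightarrow> ends e = {a, b} \<Longrightarrow> \<exists>ws. walk ends' F' (p a) ws (p b)"
  shows "\<exists>ws. walk ends' F' (p u) ws (p v)"
  using assms(1)
proof (induction rule: walk.induct)
  case (walk_Nil u) then show ?case by (blast intro: walk.walk_Nil)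
next
  case (walk_Cons e u w es v)
  then obtain ws1 where "walk ends' F' (p u) ws1 (p w)" using assms(2) by blast
  moreover obtain ws2 where "walk ends' F' (p w) ws2 (p v)" using walk_Cons by blast
  ultimately have "walk ends' F' (p u) (ws1 @ ws2) (p v)" by (rule walk_append)
  then show ?case by blast
qed

lemma walk_map_id:
  assumes "walk ends F u es v"
    and "\<And>e a b. e \<in> F \<Longrightarrow> ends e = {a, b} \<Longrightarrow> \<exists>ws. walk ends' F' a ws b"
  shows "\<exists>ws. walk ends' F' u ws v"
  using walk_map[where p="\<lambda>x. x", OF assms] by simp

lemma walk_trail: "walk ends F u es v \<Longrightarrow> \<exists>es'. set es' \<subseteq> set es \<and> distinct es' \<and> walk ends F u es' v"
proof (induction "length es" arbitrary: es rule: less_induct)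
  case less
  show ?case
  proof (cases "distinct es")
    case True then show ?thesis using less.prems by blast
  next
    case False
    then obtain xs ys zs y where es: "es = xs @ [y] @ ys @ [y] @ zs"
      using not_distinct_decomp by blast
    from less.prems es obtain m where w1: "walk ends F u xs m"
      and w2: "walk ends F m (y # ys @ y # zs) v" using walk_split by fastforce
    from w2 obtain n1 where y1: "ends y = {m, n1}" and w3: "walk ends F n1 (ys @ y # zs) v"
      and yF: "y \<in> F" by (auto elim: walk_ConsE)
    from walk_split[OF w3] obtain m' where "walk ends F m' (y # zs) v" by blast
    then obtain n2 where y2: "ends y = {m', n2}" and w4: "walk ends F n2 zs v"
      by (auto elim: walk_ConsE)
    have "\<exists>es2. length es2 < length es \<and> set es2 \<subseteq> set es \<and> walk ends F u es2 v"
    proof (cases "m = m'")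
      case True
      then have "walk ends F m (y # zs) v" using y2 w4 yF by (auto intro: walk.intros)
      then have "walk ends F u (xs @ y # zs) v" using walk_append[OF w1] by blast
      then show ?thesis using es by (intro exI[of _ "xs @ y # zs"]) auto
    next
      case False
      with y1 y2 have "m = n2" by (auto simp: doubleton_eq_iff)
      then have "walk ends F u (xs @ zs) v" using walk_append[OF w1] w4 by blast
      then show ?thesis using es by (intro exI[of _ "xs @ zs"]) auto
    qed
    then obtain es2 where "length es2 < length es" "set es2 \<subseteq> set es" "walk ends F u es2 v"
      by blast
    with less.hyps obtain es' where "set es' \<subseteq> set es2" "distinct es'" "walk ends F u es' v"
      by blast
    then show ?thesis using \<open>set es2 \<subseteq> set es\<close> by blast
  qed
qed

lemma acyclic_no_walk:
  assumes "acyclic_edges T ends" "e \<in> T" "ends e = {a, b}" "walk ends (T - {e}) a es b"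
  shows False
proof -
  obtain es' where "set es' \<subseteq> set es" "distinct es'" and w: "walk ends (T - {e}) a es' b"
    using walk_trail[OF assms(4)] by blast
  have s: "set es' \<subseteq> T - {e}" using walk_edges[OF w] .
  then have "walk ends T a es' b" using walk_restrict[OF w] by blast
  then have "walk ends T b (e # es') b" using assms(2,3)
    by (auto intro: walk.walk_Cons simp: insert_commute)
  moreover have "distinct (e # es')" using s \<open>distinct es'\<close> by auto
  ultimately show False using assms(1) unfolding acyclic_edges_def by blast
qed

lemma acyclicI:
  assumes "\<And>e a b es. e \<in> T \<Longrightarrow> ends e = {a, b} \<Longrightarrow> walk ends (T - {e}) a es b \<Longrightarrow> False"
  shows "acyclic_edges T ends"
  unfolding acyclic_edges_def
proof (intro notI, elim exE conjE)
  fix u es assume ne: "es \<noteq> []" and d: "distinct es" and w: "walk ends T u es u"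
  then obtain e es2 where es: "es = e # es2" by (cases es) auto
  with w obtain w' where "e \<in> T" "ends e = {u, w'}" and w2: "walk ends T w' es2 u"
    by (auto elim: walk_ConsE)
  have "set es2 \<subseteq> T - {e}" using walk_edges[OF w2] d es by auto
  then have "walk ends (T - {e}) w' es2 u" using walk_restrict[OF w2] by blast
  then have "walk ends (T - {e}) u (rev es2) w'" by (rule walk_rev)
  then show False using assms \<open>e \<in> T\<close> \<open>ends e = {u, w'}\<close> by blast
qed

lemma reach_edge_iff:
  assumes "e \<in> F" "ends e = {a, b}"
  shows "(\<exists>ws. walk ends F x ws a) \<longleftrightarrow> (\<exists>ws. walk ends F x ws b)"
proof -
  have 1: "walk ends F a [e] b" "walk ends F b [e] a" using assms
    by (auto intro: walk_single simp: insert_commute)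
  show ?thesis using walk_append[OF _ 1(1)] walk_append[OF _ 1(2)] by blast
qed

lemma doubleton_map:
  "{a, b} = {f c, f d} \<Longrightarrow> P (f c) = c \<Longrightarrow> P (f d) = d \<Longrightarrow> {P a, P b} = {c, d}"
  by (auto simp: doubleton_eq_iff)

locale glue =
  fixes V1 V2 :: "'v set" and E1 E2 :: "'e set" and ends1 ends2 :: "'e \<Rightarrow> 'v set"
    and d1 d2 :: 'e and x1 y1 :: 'v and \<sigma> :: "'v \<Rightarrow> 'v"
    and A1 B1 A2 B2 :: "'e set"
  assumes mg1: "multigraph V1 E1 ends1" and mg2: "multigraph V2 E2 ends2"
    and dV: "V1 \<inter> V2 = {}" and dE: "E1 \<inter> E2 = {}"
    and d1A: "d1 \<in> A1" and d1e: "ends1 d1 = {x1, y1}"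
    and d2A: "d2 \<in> A2" and d2e: "ends2 d2 = {\<sigma> x1, \<sigma> y1}"
    and U1: "A1 \<union> B1 = E1" and I1: "A1 \<inter> B1 = {}"
    and U2: "A2 \<union> B2 = E2" and I2: "A2 \<inter> B2 = {}"
    and tA1: "spanning_tree V1 E1 ends1 A1" and tB1: "spanning_tree V1 E1 ends1 B1"
    and tA2: "spanning_tree V2 E2 ends2 A2" and tB2: "spanning_tree V2 E2 ends2 B2"
begin

abbreviation "g \<equiv> glue_map x1 y1 \<sigma>"
abbreviation "se \<equiv> sum_ends E1 ends1 ends2 x1 y1 \<sigma>"
abbreviation "SV \<equiv> sum_V V1 V2 x1 y1 \<sigma>"
abbreviation "T1 \<equiv> (A1 - {d1}) \<union> B2"
abbreviation "T2 \<equiv> B1 \<union> (A2 - {d2})"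

lemma E1V: "e \<in> E1 \<Longrightarrow> ends1 e \<subseteq> V1" "e \<in> E1 \<Longrightarrow> card (ends1 e) = 2"
  using mg1 unfolding multigraph_def by auto
lemma E2V: "e \<in> E2 \<Longrightarrow> ends2 e \<subseteq> V2" "e \<in> E2 \<Longrightarrow> card (ends2 e) = 2"
  using mg2 unfolding multigraph_def by auto

lemma d1E: "d1 \<in> E1" using d1A U1 by auto
lemma d2E: "d2 \<in> E2" using d2A U2 by auto

lemma xy: "x1 \<noteq> y1" using E1V(2)[OF d1E] d1e by auto
lemma sxy: "\<sigma> x1 \<noteq> \<sigma> y1" using E2V(2)[OF d2E] d2e by auto
lemma xV: "x1 \<in> V1" "y1 \<in> V1" using E1V(1)[OF d1E] d1e by auto
lemma sV: "\<sigma> x1 \<in> V2" "\<sigma> y1 \<in> V2" using E2V(1)[OF d2E] d2e by auto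

lemma g_x: "g (\<sigma> x1) = x1" by (simp add: glue_map_def)
lemma g_y: "g (\<sigma> y1) = y1" using sxy by (simp add: glue_map_def)
lemma g_o: "v \<noteq> \<sigma> x1 \<Longrightarrow> v \<noteq> \<sigma> y1 \<Longrightarrow> g v = v" by (simp add: glue_map_def)

lemma g_V1: "v \<in> V2 \<Longrightarrow> g v \<in> V1 \<Longrightarrow> g v \<in> {x1, y1}"
  using g_x g_y g_o dV by (cases "v = \<sigma> x1 \<or> v = \<sigma> y1") auto
lemma g_notV1: "v \<in> V2 \<Longrightarrow> v \<noteq> \<sigma> x1 \<Longrightarrow> v \<noteq> \<sigma> y1 \<Longrightarrow> g v \<notin> V1"
  using g_o dV by auto

lemma inj_g: "inj_on g V2"
proof (rule inj_onI)
  fix v w assume v: "v \<in> V2" and w: "w \<in> V2" and eq: "g v = g w"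
  show "v = w"
  proof (cases "v = \<sigma> x1 \<or> v = \<sigma> y1")
    case True
    then have "g v \<in> V1" using g_x g_y xV by auto
    then have "w = \<sigma> x1 \<or> w = \<sigma> y1" using g_notV1[OF w] eq by auto
    then show ?thesis using True eq g_x g_y xy by auto
  next
    case False
    then have "g v \<notin> V1" using g_notV1[OF v] by auto
    then have "\<not> (w = \<sigma> x1 \<or> w = \<sigma> y1)" using eq g_x g_y xV by auto
    then show ?thesis using False eq g_o by auto
  qed
qed

lemma se1: "e \<in> E1 \<Longrightarrow> se e = ends1 e" by (simp add: sum_ends_def)
lemma se2: "e \<in> E2 \<Longrightarrow> se e = g ` ends2 e" using dE by (auto simp: sum_ends_def)

lemma sub: "A1 \<subseteq> E1" "B1 \<subseteq> E1" "A2 \<subseteq> E2" "B2 \<subseteq> E2" using U1 U2 by auto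

lemma trees: "connected_on V1 A1 ends1" "acyclic_edges A1 ends1"
  "connected_on V1 B1 ends1" "acyclic_edges B1 ends1"
  "connected_on V2 A2 ends2" "acyclic_edges A2 ends2"
  "connected_on V2 B2 ends2" "acyclic_edges B2 ends2"
  using tA1 tB1 tA2 tB2 unfolding spanning_tree_def by auto

lemma lift1: "walk ends1 F u es v \<Longrightarrow> F \<subseteq> E1 \<Longrightarrow> walk se F u es v"
proof (induction rule: walk.induct)
  case (walk_Nil u) then show ?case by (auto intro: walk.intros)
next
  case (walk_Cons e u w es v)
  then have "se e = {u, w}" using se1 by auto
  then show ?case using walk_Cons by (auto intro: walk.intros)
qed

lemma lift2: "walk ends2 F u es v \<Longrightarrow> F \<subseteq> E2 \<Longrightarrow> walk se F (g u) es (g v)"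
proof (induction rule: walk.induct)
  case (walk_Nil u) then show ?case by (auto intro: walk.intros)
next
  case (walk_Cons e u w es v)
  then have "se e = {g u, g w}" using se2 by auto
  then show ?case using walk_Cons by (auto intro: walk.intros)
qed

lemma SV_eq: "SV = V1 \<union> g ` V2" by (simp add: sum_V_def)

lemma pair_walk:
  assumes "\<exists>ws. walk ends F c ws d" "{a, b} = {c, d}"
  shows "\<exists>ws. walk ends F a ws b"
proof -
  obtain ws where w: "walk ends F c ws d" using assms(1) by blast
  from assms(2) have "(a = c \<and> b = d) \<or> (a = d \<and> b = c)" by (simp add: doubleton_eq_iff)
  then show ?thesis using w walk_rev[OF w] by blast
qed

lemma conn_from:
  assumes "\<And>v. v \<in> S \<Longrightarrow> \<exists>ws. walk ends F x ws v"
  shows "connected_on S F ends"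
  unfolding connected_on_def
proof (intro ballI)
  fix u v assume "u \<in> S" "v \<in> S"
  then obtain ws1 ws2 where w1: "walk ends F x ws1 u" and w2: "walk ends F x ws2 v" using assms by blast
  have "walk ends F u (rev ws1 @ ws2) v" by (rule walk_append[OF walk_rev[OF w1] w2])
  then show "\<exists>es. walk ends F u es v" by blast
qed

lemma T1_xy: "\<exists>ws. walk se T1 x1 ws y1"
proof -
  obtain ws where "walk ends2 B2 (\<sigma> x1) ws (\<sigma> y1)" using trees(7) sV unfolding connected_on_def by blast
  from lift2[OF this sub(4)] have "walk se B2 x1 ws y1" using g_x g_y by simp
  note W = this
  show ?thesis by (rule exI, rule walk_mono[OF W]) auto
qed

lemma T1_conn: "connected_on SV T1 se"
proof (rule conn_from[where x = x1])
  fix v assume "v \<in> SV"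
  then consider "v \<in> V1" | v' where "v' \<in> V2" "v = g v'" using SV_eq by auto
  then show "\<exists>ws. walk se T1 x1 ws v"
  proof cases
    case 1
    then obtain ws where w: "walk ends1 A1 x1 ws v" using trees(1) xV unfolding connected_on_def by blast
    show ?thesis
    proof (rule walk_map_id[OF w])
      fix e a b assume e: "e \<in> A1" "ends1 e = {a, b}"
      show "\<exists>ws. walk se T1 a ws b"
      proof (cases "e = d1")
        case True
        then have "{a, b} = {x1, y1}" using e(2) d1e by metis
        then show ?thesis by (rule pair_walk[OF T1_xy])
      next
        case False
        have eT: "e \<in> T1" using False e by blast
        have "e \<in> E1" using e(1) sub(1) by blast
        then have "se e = {a, b}" using se1 e(2) by simp
        with eT show ?thesis by (blast intro: walk_single)
      qed
    qed
  next
    case 2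
    then obtain ws where w: "walk ends2 B2 (\<sigma> x1) ws v'" using trees(7) sV unfolding connected_on_def by blast
    from lift2[OF this sub(4)] have "walk se B2 x1 ws v" using g_x 2 by simp
    note W = this
    show ?thesis by (rule exI, rule walk_mono[OF W]) auto
  qed
qed

lemma T2_xy: "\<exists>ws. walk se T2 x1 ws y1"
proof -
  obtain ws where "walk ends1 B1 x1 ws y1" using trees(3) xV unfolding connected_on_def by blast
  from lift1[OF this sub(2)] have "walk se B1 x1 ws y1" .
  note W = this
  show ?thesis by (rule exI, rule walk_mono[OF W]) auto
qed

lemma T2_conn: "connected_on SV T2 se"
proof (rule conn_from[where x = x1])
  fix v assume "v \<in> SV"
  then consider "v \<in> V1" | v' where "v' \<in> V2" "v = g v'" using SV_eq by auto
  then show "\<exists>ws. walk se T2 x1 ws v"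
  proof cases
    case 1
    then obtain ws where w: "walk ends1 B1 x1 ws v" using trees(3) xV unfolding connected_on_def by blast
    from lift1[OF this sub(2)] have "walk se B1 x1 ws v" .
    note W = this
    show ?thesis by (rule exI, rule walk_mono[OF W]) auto
  next
    case 2
    then obtain ws where w: "walk ends2 A2 (\<sigma> x1) ws v'" using trees(5) sV unfolding connected_on_def by blast
    have "\<exists>ws. walk se T2 (g (\<sigma> x1)) ws (g v')"
    proof (rule walk_map[OF w])
      fix e a b assume e: "e \<in> A2" "ends2 e = {a, b}"
      show "\<exists>ws. walk se T2 (g a) ws (g b)"
      proof (cases "e = d2")
        case True
        then have "{a, b} = {\<sigma> x1, \<sigma> y1}" using e(2) d2e by metis
        then have "{g a, g b} = {x1, y1}" using g_x g_y by (auto simp: doubleton_eq_iff)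
        then show ?thesis by (rule pair_walk[OF T2_xy])
      next
        case False
        have eT: "e \<in> T2" using False e by blast
        have "e \<in> E2" using e(1) sub(3) by blast
        then have "se e = {g a, g b}" using se2 e(2) by simp
        with eT show ?thesis by (blast intro: walk_single)
      qed
    qed
    then show ?thesis using g_x 2 by simp
  qed
qed

lemma two_walk:
  assumes "d \<in> F" "ends d = {p, q}" "a \<in> {p, q}" "b \<in> {p, q}"
  shows "\<exists>ws. walk ends F a ws b"
proof (cases "a = b")
  case True then show ?thesis using walk.walk_Nil by metis
next
  case False
  have "{a, b} = {p, q}" using assms(3,4) False by blast
  then have "ends d = {a, b}" using assms(2) by simp
  then show ?thesis by (blast intro: walk_single[OF assms(1)])
qed

lemma edge1:
  assumes "e \<in> E1" "se e = {a, b}"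
  shows "ends1 e = {a, b}" "a \<in> V1" "b \<in> V1"
proof -
  show e1: "ends1 e = {a, b}" using assms(2) se1[OF assms(1)] by simp
  show "a \<in> V1" "b \<in> V1" using E1V(1)[OF assms(1)] e1 by auto
qed

lemma edge2:
  assumes "e \<in> E2" "se e = {a, b}"
  obtains c d where "ends2 e = {c, d}" "c \<in> V2" "d \<in> V2" "{a, b} = {g c, g d}"
proof -
  obtain c d where cd: "ends2 e = {c, d}" using E2V(2)[OF assms(1)] by (metis card_2_iff)
  have "c \<in> V2" "d \<in> V2" using E2V(1)[OF assms(1)] cd by auto
  moreover have "{a, b} = {g c, g d}" using assms(2) se2[OF assms(1)] cd by simp
  ultimately show ?thesis using that cd by blast
qed

lemma T1_acyc: "acyclic_edges T1 se"
proof (rule acyclicI)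
  fix e a b es assume e: "e \<in> T1" and eab: "se e = {a, b}" and w: "walk se (T1 - {e}) a es b"
  show False
  proof (cases "e \<in> A1 - {d1}")
    case True
    have eE: "e \<in> E1" using True sub(1) by blast
    note e1 = edge1[OF eE eab]
    define P1 where "P1 v = (if v \<in> V1 then v else x1)" for v
    have d1Ae: "d1 \<in> A1 - {e}" using d1A True by blast
    have "\<exists>ws. walk ends1 (A1 - {e}) (P1 a) ws (P1 b)"
    proof (rule walk_map[OF w])
      fix e' a' b' assume e': "e' \<in> T1 - {e}" "se e' = {a', b'}"
      show "\<exists>ws. walk ends1 (A1 - {e}) (P1 a') ws (P1 b')"
      proof (cases "e' \<in> A1 - {d1}")
        case True
        have e'E: "e' \<in> E1" using True sub(1) by blast
        note f = edge1[OF e'E e'(2)]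
        have "e' \<in> A1 - {e}" using True e'(1) by blast
        then have "walk ends1 (A1 - {e}) a' [e'] b'" using f(1) by (rule walk_single)
        moreover have "P1 a' = a'" "P1 b' = b'" using f(2,3) unfolding P1_def by auto
        ultimately show ?thesis by auto
      next
        case False
        then have "e' \<in> B2" using e'(1) by blast
        then have e'E: "e' \<in> E2" using sub(4) by blast
        obtain c d where cd: "ends2 e' = {c, d}" "c \<in> V2" "d \<in> V2" "{a', b'} = {g c, g d}"
          using edge2[OF e'E e'(2)] by blast
        have "a' \<in> g ` V2" "b' \<in> g ` V2" using cd by (auto simp: doubleton_eq_iff)
        then have "P1 a' \<in> {x1, y1}" "P1 b' \<in> {x1, y1}" using g_V1 unfolding P1_def by auto
        then show ?thesis using two_walk[where ends=ends1 and p=x1 and q=y1, OF d1Ae d1e] by blast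
      qed
    qed
    moreover have "P1 a = a" "P1 b = b" using e1(2,3) unfolding P1_def by auto
    ultimately obtain ws where "walk ends1 (A1 - {e}) a ws b" by auto
    moreover have "e \<in> A1" using True by blast
    ultimately show False using acyclic_no_walk[OF trees(2) _ e1(1)] by blast
  next
    case False
    then have eB: "e \<in> B2" using e by blast
    then have eE: "e \<in> E2" using sub(4) by blast
    obtain a0 b0 where e0: "ends2 e = {a0, b0}" "a0 \<in> V2" "b0 \<in> V2" "{a, b} = {g a0, g b0}"
      using edge2[OF eE eab] by blast
    define R where "R v = (\<exists>ws. walk ends1 (A1 - {d1}) x1 ws v)" for v
    define P2 where "P2 v = (if v \<in> V1 then (if R v then \<sigma> x1 else \<sigma> y1) else v)" for v
    have Rx: "R x1" unfolding R_def by (blast intro: walk.walk_Nil)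
    have Ry: "\<not> R y1" unfolding R_def using acyclic_no_walk[OF trees(2) d1A d1e] by blast
    have P2g: "P2 (g w) = w" if "w \<in> V2" for w
    proof (cases "w = \<sigma> x1 \<or> w = \<sigma> y1")
      case True then show ?thesis using g_x g_y xV Rx Ry unfolding P2_def by auto
    next
      case False then show ?thesis using g_o g_notV1[OF that] unfolding P2_def by auto
    qed
    have "\<exists>ws. walk ends2 (B2 - {e}) (P2 a) ws (P2 b)"
    proof (rule walk_map[OF w])
      fix e' a' b' assume e': "e' \<in> T1 - {e}" "se e' = {a', b'}"
      show "\<exists>ws. walk ends2 (B2 - {e}) (P2 a') ws (P2 b')"
      proof (cases "e' \<in> A1 - {d1}")
        case True
        have e'E: "e' \<in> E1" using True sub(1) by blast
        note f = edge1[OF e'E e'(2)]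
        have "R a' = R b'" unfolding R_def by (rule reach_edge_iff[where ends=ends1 and a=a' and b=b', OF True f(1)])
        then have "P2 a' = P2 b'" using f(2,3) unfolding P2_def by auto
        then show ?thesis by (metis walk.walk_Nil)
      next
        case False
        then have e'B: "e' \<in> B2 - {e}" using e'(1) by blast
        then have e'E: "e' \<in> E2" using sub(4) by blast
        obtain c d where cd: "ends2 e' = {c, d}" "c \<in> V2" "d \<in> V2" "{a', b'} = {g c, g d}"
          using edge2[OF e'E e'(2)] by blast
        have "{P2 a', P2 b'} = {c, d}" by (rule doubleton_map[OF cd(4) P2g[OF cd(2)] P2g[OF cd(3)]])
        then have "ends2 e' = {P2 a', P2 b'}" using cd(1) by simp
        then show ?thesis by (blast intro: walk_single[OF e'B])
      qed
    qed
    moreover have "{P2 a, P2 b} = {a0, b0}" by (rule doubleton_map[OF e0(4) P2g[OF e0(2)] P2g[OF e0(3)]])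
    then have "ends2 e = {P2 a, P2 b}" using e0(1) by simp
    ultimately show False using acyclic_no_walk[OF trees(8) eB] by blast
  qed
qed

lemma T2_acyc: "acyclic_edges T2 se"
proof (rule acyclicI)
  fix e a b es assume e: "e \<in> T2" and eab: "se e = {a, b}" and w: "walk se (T2 - {e}) a es b"
  show False
  proof (cases "e \<in> B1")
    case True
    have eE: "e \<in> E1" using True sub(2) by blast
    note e1 = edge1[OF eE eab]
    define Q where "Q v = (\<exists>ws. walk ends2 (A2 - {d2}) (\<sigma> x1) ws v)" for v
    define P3 where "P3 v = (if v \<in> V1 then v else if Q v then x1 else y1)" for v
    have Qx: "Q (\<sigma> x1)" unfolding Q_def by (blast intro: walk.walk_Nil)
    have Qy: "\<not> Q (\<sigma> y1)" unfolding Q_def using acyclic_no_walk[OF trees(6) d2A d2e] by blast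
    have P3g: "P3 (g w) = (if Q w then x1 else y1)" if "w \<in> V2" for w
    proof (cases "w = \<sigma> x1 \<or> w = \<sigma> y1")
      case True then show ?thesis using g_x g_y xV Qx Qy unfolding P3_def by auto
    next
      case False then show ?thesis using g_o g_notV1[OF that] unfolding P3_def by auto
    qed
    have "\<exists>ws. walk ends1 (B1 - {e}) (P3 a) ws (P3 b)"
    proof (rule walk_map[OF w])
      fix e' a' b' assume e': "e' \<in> T2 - {e}" "se e' = {a', b'}"
      show "\<exists>ws. walk ends1 (B1 - {e}) (P3 a') ws (P3 b')"
      proof (cases "e' \<in> B1")
        case True
        have e'E: "e' \<in> E1" using True sub(2) by blast
        note f = edge1[OF e'E e'(2)]
        have "e' \<in> B1 - {e}" using True e'(1) by blast
        then have "walk ends1 (B1 - {e}) a' [e'] b'" using f(1) by (rule walk_single)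
        moreover have "P3 a' = a'" "P3 b' = b'" using f(2,3) unfolding P3_def by auto
        ultimately show ?thesis by auto
      next
        case False
        then have eA: "e' \<in> A2 - {d2}" using e'(1) by blast
        then have e'E: "e' \<in> E2" using sub(3) by blast
        obtain c d where cd: "ends2 e' = {c, d}" "c \<in> V2" "d \<in> V2" "{a', b'} = {g c, g d}"
          using edge2[OF e'E e'(2)] by blast
        have "Q c = Q d" unfolding Q_def by (rule reach_edge_iff[where ends=ends2 and a=c and b=d, OF eA cd(1)])
        then have "P3 (g c) = P3 (g d)" using P3g[OF cd(2)] P3g[OF cd(3)] by simp
        then have "P3 a' = P3 b'" using cd(4) by (auto simp: doubleton_eq_iff)
        then show ?thesis by (metis walk.walk_Nil)
      qed
    qed
    moreover have "P3 a = a" "P3 b = b" using e1(2,3) unfolding P3_def by auto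
    ultimately obtain ws where "walk ends1 (B1 - {e}) a ws b" by auto
    then show False using acyclic_no_walk[OF trees(4) True e1(1)] by blast
  next
    case False
    then have eA: "e \<in> A2 - {d2}" using e by blast
    then have eE: "e \<in> E2" using sub(3) by blast
    obtain a0 b0 where e0: "ends2 e = {a0, b0}" "a0 \<in> V2" "b0 \<in> V2" "{a, b} = {g a0, g b0}"
      using edge2[OF eE eab] by blast
    define P4 where "P4 v = (if v \<in> V1 then (if v = y1 then \<sigma> y1 else \<sigma> x1) else v)" for v
    have P4g: "P4 (g w) = w" if "w \<in> V2" for w
    proof (cases "w = \<sigma> x1 \<or> w = \<sigma> y1")
      case True then show ?thesis using g_x g_y xV xy unfolding P4_def by auto
    next
      case False then show ?thesis using g_o g_notV1[OF that] unfolding P4_def by auto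
    qed
    have d2Ae: "d2 \<in> A2 - {e}" using d2A eA by blast
    have "\<exists>ws. walk ends2 (A2 - {e}) (P4 a) ws (P4 b)"
    proof (rule walk_map[OF w])
      fix e' a' b' assume e': "e' \<in> T2 - {e}" "se e' = {a', b'}"
      show "\<exists>ws. walk ends2 (A2 - {e}) (P4 a') ws (P4 b')"
      proof (cases "e' \<in> B1")
        case True
        have e'E: "e' \<in> E1" using True sub(2) by blast
        note f = edge1[OF e'E e'(2)]
        have "P4 a' \<in> {\<sigma> x1, \<sigma> y1}" "P4 b' \<in> {\<sigma> x1, \<sigma> y1}" using f(2,3) unfolding P4_def by auto
        then show ?thesis using two_walk[where ends=ends2 and p="\<sigma> x1" and q="\<sigma> y1", OF d2Ae d2e] by blast
      next
        case False
        then have e'A: "e' \<in> A2 - {e}" "e' \<in> A2 - {d2}" using e'(1) by blast+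
        then have e'E: "e' \<in> E2" using sub(3) by blast
        obtain c d where cd: "ends2 e' = {c, d}" "c \<in> V2" "d \<in> V2" "{a', b'} = {g c, g d}"
          using edge2[OF e'E e'(2)] by blast
        have "{P4 a', P4 b'} = {c, d}" by (rule doubleton_map[OF cd(4) P4g[OF cd(2)] P4g[OF cd(3)]])
        then have "ends2 e' = {P4 a', P4 b'}" using cd(1) by simp
        then show ?thesis by (blast intro: walk_single[OF e'A(1)])
      qed
    qed
    moreover have "{P4 a, P4 b} = {a0, b0}" by (rule doubleton_map[OF e0(4) P4g[OF e0(2)] P4g[OF e0(3)]])
    then have "ends2 e = {P4 a, P4 b}" using e0(1) by simp
    moreover have "e \<in> A2" using eA by blast
    ultimately show False using acyclic_no_walk[OF trees(6)] by blast
  qed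
qed

lemma result: "bispanning SV (sum_E E1 E2 d1 d2) se"
proof -
  have edges: "se e \<subseteq> SV \<and> card (se e) = 2" if eS: "e \<in> sum_E E1 E2 d1 d2" for e
  proof -
    consider "e \<in> E1" | "e \<in> E2" "e \<notin> E1" using eS unfolding sum_E_def by blast
    then show ?thesis
    proof cases
      case 1 then show ?thesis using se1[OF 1] E1V[OF 1] SV_eq by auto
    next
      case 2
      have "se e = g ` ends2 e" using se2 2 by blast
      moreover have "card (g ` ends2 e) = card (ends2 e)"
        using inj_g E2V(1)[OF 2(1)] by (metis card_image inj_on_subset)
      ultimately show ?thesis using E2V[OF 2(1)] SV_eq by auto
    qed
  qed
  have mg: "multigraph SV (sum_E E1 E2 d1 d2) se"
    unfolding multigraph_def
  proof (intro conjI)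
    show "finite SV" using mg1 mg2 SV_eq unfolding multigraph_def by auto
    show "finite (sum_E E1 E2 d1 d2)" using mg1 mg2 unfolding multigraph_def sum_E_def by auto
    show "\<forall>e\<in>sum_E E1 E2 d1 d2. se e \<subseteq> SV \<and> card (se e) = 2" using edges by blast
  qed
  have d2B: "d2 \<notin> B2" using d2A I2 by auto
  have d1B: "d1 \<notin> B1" using d1A I1 by auto
  have s1: "T1 \<subseteq> sum_E E1 E2 d1 d2" using sub d2B unfolding sum_E_def by auto
  have s2: "T2 \<subseteq> sum_E E1 E2 d1 d2" using sub d1B unfolding sum_E_def by auto
  have "T1 \<inter> T2 = {}" using I1 I2 dE sub by auto
  moreover have "T1 \<union> T2 = sum_E E1 E2 d1 d2" using U1 U2 d1B d2B unfolding sum_E_def by auto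
  moreover have "spanning_tree SV (sum_E E1 E2 d1 d2) se T1"
    using s1 T1_conn T1_acyc unfolding spanning_tree_def by auto
  moreover have "spanning_tree SV (sum_E E1 E2 d1 d2) se T2"
    using s2 T2_conn T2_acyc unfolding spanning_tree_def by auto
  ultimately show ?thesis using mg unfolding bispanning_def by blast
qed

end

theorem mainTheorem9:
  fixes V1 V2 :: "'v set" and E1 E2 :: "'e set"
    and ends1 ends2 :: "'e \<Rightarrow> 'v set"
    and d1 d2 :: 'e and x1 y1 x2 y2 :: 'v and \<sigma> :: "'v \<Rightarrow> 'v"
  assumes "bispanning V1 E1 ends1" and "bispanning V2 E2 ends2"
    and "V1 \<inter> V2 = {}" and "E1 \<inter> E2 = {}"
    and "d1 \<in> E1" and "ends1 d1 = {x1, y1}"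
    and "d2 \<in> E2" and "ends2 d2 = {x2, y2}"
    and "bij_betw \<sigma> {x1, y1} {x2, y2}"
  shows "bispanning (sum_V V1 V2 x1 y1 \<sigma>) (sum_E E1 E2 d1 d2)
           (sum_ends E1 ends1 ends2 x1 y1 \<sigma>)"
proof -
  have mg1: "multigraph V1 E1 ends1" using assms(1) unfolding bispanning_def by blast
  have mg2: "multigraph V2 E2 ends2" using assms(2) unfolding bispanning_def by blast
  obtain T1 T2 where t1: "T1 \<inter> T2 = {}" "T1 \<union> T2 = E1"
      "spanning_tree V1 E1 ends1 T1" "spanning_tree V1 E1 ends1 T2"
    using assms(1) unfolding bispanning_def by blast
  obtain A1 B1 where a1: "A1 \<inter> B1 = {}" "A1 \<union> B1 = E1"
      "spanning_tree V1 E1 ends1 A1" "spanning_tree V1 E1 ends1 B1" "d1 \<in> A1"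
  proof (cases "d1 \<in> T1")
    case True then show ?thesis using that t1 by blast
  next
    case False
    then have "d1 \<in> T2" using t1(2) assms(5) by blast
    then show ?thesis using that[of T2 T1] t1 by blast
  qed
  obtain S1 S2 where t2: "S1 \<inter> S2 = {}" "S1 \<union> S2 = E2"
      "spanning_tree V2 E2 ends2 S1" "spanning_tree V2 E2 ends2 S2"
    using assms(2) unfolding bispanning_def by blast
  obtain A2 B2 where a2: "A2 \<inter> B2 = {}" "A2 \<union> B2 = E2"
      "spanning_tree V2 E2 ends2 A2" "spanning_tree V2 E2 ends2 B2" "d2 \<in> A2"
  proof (cases "d2 \<in> S1")
    case True then show ?thesis using that t2 by blast
  next
    case False
    then have "d2 \<in> S2" using t2(2) assms(7) by blast
    then show ?thesis using that[of S2 S1] t2 by blast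
  qed
  have "\<sigma> ` {x1, y1} = {x2, y2}" using assms(9) by (simp add: bij_betw_def)
  then have d2e: "ends2 d2 = {\<sigma> x1, \<sigma> y1}" using assms(8) by simp
  interpret glue V1 V2 E1 E2 ends1 ends2 d1 d2 x1 y1 \<sigma> A1 B1 A2 B2
  proof
    show "A1 \<union> B1 = E1" "A1 \<inter> B1 = {}" "A2 \<union> B2 = E2" "A2 \<inter> B2 = {}" using a1 a2 by auto
  qed (use mg1 mg2 assms(3,4,6) a1 a2 d2e in auto)
  show ?thesis by (rule result)
qed

end
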